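(* For the merging problem with $n$ items and $k\le n$ slots (with $a_i\ge 0$ almost surely and $o_i\ge 0$, and arbitrary, not necessarily identical, distributions $G_i$), the G-CHANGE mechanism is $1/2$-approximate: $\mathrm{OBJ}(\mathcal M^C)\ge\frac12\mathrm{OBJ}(\mathcal M^* )$.
   Context: Merging problem: $n$ items indexed by $[n]$, $k\le n$ slots. Each item $i$ has a random ad value $a_i$, drawn independently from a regular distribution $G_i$ ($\boldsymbol a\sim G=\times_i G_i$), and a fixed organic value $o_i\ge0$. A mechanism is a pair of allocation rules $x,y$ with $x_i(\boldsymbol a),y_i(\boldsymbol a)\in\{0,1\}$ ($x_i=1$: item $i$ shown as ad; $y_i=1$: shown organically) satisfying for all $\boldsymbol a,i$: (i) $\sum_i(x_i+y_i)\le k$; (ii) $x_i+y_i\le 1$; (iii) $y_i(a_i,\boldsymbol a_{-i})$ independent of $a_i$; (iv) $x_i(a_i,\boldsymbol a_{-i})$ non-decreasing in $a_i$. Objective $\mathrm{OBJ}=\mathbb E_{\boldsymbol a\sim G}[\sum_i(a_ix_i(\boldsymbol a)+o_iy_i(\boldsymbol a))]$; $\mathcal M^*$ maximizes it subject to (i)–(iv). A mechanism $\mathcal M$ is $\tau$-approximate if $\mathrm{OBJ}(\mathcal M)/\mathrm{OBJ}(\mathcal M^* )\ge\tau$. Notation: $\max^{(m)}S$ is the sum of the $m$ largest elements of a finite multiset $S$ ($\max^{(0)}S=0$); $\mathbb E_{a_j}[\cdot]$ denotes expectation over $a_j\sim G_j$ only, the other coordinates held fixed. G-CHANGE-$I$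 mechanism $\mathcal M^C_I$, for an ordered list $I=(i_1,\dots,i_k)$ of distinct items: for $t\in[k]$ let $R_t=\sum_{j=1}^{t-1}o_{i_j}+\max^{(k-t)}\{a_i: i\notin\{i_1,\dots,i_t\}\}$, and define recursively $w_{i_1}^{\boldsymbol a}=\mathbb E_{a_{i_1}}[\max^{(k)}\{a_1,\dots,a_n\}]-R_1$ and, for $t>1$, $w_{i_t}^{\boldsymbol a}=\mathbb E_{a_{i_t}}[\max\{o_{i_{t-1}}+R_{t-1},\,w_{i_{t-1}}^{\boldsymbol a}+R_{t-1}\}]-R_t$. Let $s^*$ be the largest $s\in[k]$ with $o_{i_s}\ge w_{i_s}^{\boldsymbol a}$ and $o_{i_t}<w_{i_t}^{\boldsymbol a}$ for all $t>s$ (and $s^*=0$ if none). The mechanism shows $i_1,\dots,i_{s^*}$ in organic form and shows as ads the $k-s^*$ items outside $\{i_1,\dots,i_{s^*}\}$ with the largest $a_i$. Its objective is $\mathrm{OBJ}(\mathcal M^C_I)=\mathbb E_{\boldsymbol a\sim G}\big[\max\{\sum_{j=1}^k o_{i_j},\ w_{i_k}^{\boldsymbol a}+\sum_{j=1}^{k-1}o_{i_j}\}\big]$. The G-CHANGE mechanism $\mathcal M^C$ runs the $\mathcal M^C_I$ of highest objective over all ordered lists $I$ of $k$ distinct items of $[n]$, so $\mathrm{OBJ}(\mathcal M^C)=\max_I\mathrm{OBJ}(\mathcal M^C_I)$.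
   Formalization: Each $a_i$ also has finite mean under $G_i$, and $\mathrm{OBJ}(\mathcal M^C_I)$ is the expected value of the described allocation (organic $i_1,\dots,i_{s^*}$, ads the $k-s^*$ largest others) instead of the closed-form max expression. The paper assumes this as well. *)

theory Defs
  imports "HOL-Probability.Probability"
begin

(* Items are the naturals 0..<n (i.e. [n] shifted by one); a bid profile is a
   function nat => real, of which only coordinates < n matter. *)

definition topsum :: "nat \<Rightarrow> nat set \<Rightarrow> (nat \<Rightarrow> real) \<Rightarrow> real" where
  "topsum m A a = Max ((\<lambda>B. \<Sum>i\<in>B. a i) ` {B. B \<subseteq> A \<and> card B = m})"

definition profile_dist :: "nat \<Rightarrow> (nat \<Rightarrow> real measure) \<Rightarrow> (nat \<Rightarrow> real) measure" where
  "profile_dist n G = PiM {..<n} G"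

definition feasible_mech ::
  "nat \<Rightarrow> nat \<Rightarrow> ((nat \<Rightarrow> real) \<Rightarrow> nat \<Rightarrow> bool) \<Rightarrow> ((nat \<Rightarrow> real) \<Rightarrow> nat \<Rightarrow> bool) \<Rightarrow> bool" where
  "feasible_mech n k x y \<longleftrightarrow>
     (\<forall>a. card {i. i < n \<and> x a i} + card {i. i < n \<and> y a i} \<le> k) \<and>
     (\<forall>a i. i < n \<longrightarrow> \<not> (x a i \<and> y a i)) \<and>
     (\<forall>a i t. i < n \<longrightarrow> y (a(i := t)) i = y a i) \<and>
     (\<forall>a i s t. i < n \<longrightarrow> s \<le> t \<longrightarrow> x (a(i := s)) i \<longrightarrow> x (a(i := t)) i)"

definition OBJ ::
  "nat \<Rightarrow> (nat \<Rightarrow> real measure) \<Rightarrow> (nat \<Rightarrow> real) \<Rightarrow>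
   ((nat \<Rightarrow> real) \<Rightarrow> nat \<Rightarrow> bool) \<Rightarrow> ((nat \<Rightarrow> real) \<Rightarrow> nat \<Rightarrow> bool) \<Rightarrow> real" where
  "OBJ n G ov x y = (\<integral>a. (\<Sum>i<n. (if x a i then a i else 0) + (if y a i then ov i else 0))
                      \<partial>profile_dist n G)"

(* R_{t+1} for the list I (0-based t):
   sum_{j<t} o_{I!j} + max^(k-(t+1)) {a_i : i \<notin> {I!0,...,I!t}} *)
definition Rc :: "nat \<Rightarrow> nat \<Rightarrow> (nat \<Rightarrow> real) \<Rightarrow> nat list \<Rightarrow> nat \<Rightarrow> (nat \<Rightarrow> real) \<Rightarrow> real" where
  "Rc n k ov I t a = (\<Sum>j<t. ov (I ! j)) + topsum (k - Suc t) ({..<n} - set (take (Suc t) I)) a"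

(* wC ... t a = w_{i_{t+1}}^a  (0-based t) *)
primrec wC :: "nat \<Rightarrow> nat \<Rightarrow> (nat \<Rightarrow> real measure) \<Rightarrow> (nat \<Rightarrow> real) \<Rightarrow> nat list \<Rightarrow> nat
               \<Rightarrow> (nat \<Rightarrow> real) \<Rightarrow> real" where
  "wC n k G ov I 0 a =
     (\<integral>s. topsum k {..<n} (a(I ! 0 := s)) \<partial>G (I ! 0)) - Rc n k ov I 0 a"
| "wC n k G ov I (Suc t) a =
     (\<integral>s. max (ov (I ! t) + Rc n k ov I t (a(I ! Suc t := s)))
               (wC n k G ov I t (a(I ! Suc t := s)) + Rc n k ov I t (a(I ! Suc t := s)))
        \<partial>G (I ! Suc t)) - Rc n k ov I (Suc t) a"

definition sstar :: "nat \<Rightarrow> nat \<Rightarrow> (nat \<Rightarrow> real measure) \<Rightarrow> (nat \<Rightarrow> real) \<Rightarrow> nat list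
                     \<Rightarrow> (nat \<Rightarrow> real) \<Rightarrow> nat" where
  "sstar n k G ov I a =
     Max ({0} \<union> {s \<in> {1..k}. ov (I ! (s - 1)) \<ge> wC n k G ov I (s - 1) a})"

definition OBJ_GC_I :: "nat \<Rightarrow> nat \<Rightarrow> (nat \<Rightarrow> real measure) \<Rightarrow> (nat \<Rightarrow> real) \<Rightarrow> nat list \<Rightarrow> real" where
  "OBJ_GC_I n k G ov I =
     (\<integral>a. (let s = sstar n k G ov I a in
            (\<Sum>j<s. ov (I ! j)) + topsum (k - s) ({..<n} - set (take s I)) a)
      \<partial>profile_dist n G)"

definition OBJ_GC :: "nat \<Rightarrow> nat \<Rightarrow> (nat \<Rightarrow> real measure) \<Rightarrow> (nat \<Rightarrow> real) \<Rightarrow> real" where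
  "OBJ_GC n k G ov =
     Max (OBJ_GC_I n k G ov ` {I. distinct I \<and> length I = k \<and> set I \<subseteq> {..<n}})"

end

theory Submission imports Defs begin

lemma topsum_fam:
  assumes "finite A" "m \<le> card A"
  shows "finite {B. B \<subseteq> A \<and> card B = m}" "{B. B \<subseteq> A \<and> card B = m} \<noteq> {}"
proof -
  show "finite {B. B \<subseteq> A \<and> card B = m}" using assms(1) by (rule rev_finite_subset[OF finite_Pow_iff[THEN iffD2]]) auto
  obtain B where "B \<subseteq> A" "card B = m" using obtain_subset_with_card_n[OF assms(2)] by metis
  then show "{B. B \<subseteq> A \<and> card B = m} \<noteq> {}" by auto
qed

lemma topsum_ge:
  assumes "finite A" "B \<subseteq> A" "card B = m"
  shows "(\<Sum>i\<in>B. a i) \<le> topsum m A a"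
proof -
  have m: "m \<le> card A" using assms card_mono by blast
  show ?thesis unfolding topsum_def using topsum_fam[OF assms(1) m] assms
    by (intro Max_ge) auto
qed

lemma topsum_attained:
  assumes "finite A" "m \<le> card A"
  obtains B where "B \<subseteq> A" "card B = m" "topsum m A a = (\<Sum>i\<in>B. a i)"
proof -
  have "topsum m A a \<in> (\<lambda>B. \<Sum>i\<in>B. a i) ` {B. B \<subseteq> A \<and> card B = m}"
    unfolding topsum_def using topsum_fam[OF assms] by (intro Max_in) auto
  then show ?thesis using that by auto
qed

lemma topsum_zero: "finite A \<Longrightarrow> topsum 0 A a = 0"
proof -
  assume "finite A"
  then have "{B. B \<subseteq> A \<and> card B = 0} = {{}}" by (auto dest: finite_subset)
  then show ?thesis by (simp add: topsum_def)
qed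

lemma topsum_nonneg:
  assumes "finite A" "m \<le> card A" "\<And>i. i \<in> A \<Longrightarrow> a i \<ge> 0"
  shows "topsum m A a \<ge> 0"
proof -
  obtain B where "B \<subseteq> A" "topsum m A a = (\<Sum>i\<in>B. a i)" using topsum_attained[OF assms(1,2)] by metis
  then show ?thesis using assms(3) by (auto intro: sum_nonneg)
qed

lemma topsum_abs:
  assumes "finite A" "m \<le> card A"
  shows "\<bar>topsum m A a\<bar> \<le> (\<Sum>i\<in>A. \<bar>a i\<bar>)"
proof -
  obtain B where B: "B \<subseteq> A" "topsum m A a = (\<Sum>i\<in>B. a i)" using topsum_attained[OF assms(1,2)] by metis
  have "\<bar>\<Sum>i\<in>B. a i\<bar> \<le> (\<Sum>i\<in>B. \<bar>a i\<bar>)" by (rule sum_abs)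
  also have "\<dots> \<le> (\<Sum>i\<in>A. \<bar>a i\<bar>)" using B assms(1) by (intro sum_mono2) auto
  finally show ?thesis using B by simp
qed

lemma topsum_upd: "j \<notin> A \<Longrightarrow> topsum m A (a(j := v)) = topsum m A a"
  unfolding topsum_def
  by (intro arg_cong[where f=Max] image_cong refl sum.cong) auto

lemma topsum_cong: "(\<And>i. i \<in> A \<Longrightarrow> a i = b i) \<Longrightarrow> topsum m A a = topsum m A b"
  unfolding topsum_def
  by (intro arg_cong[where f=Max] image_cong refl sum.cong) auto

locale gcb =
  fixes n :: nat and G :: "nat \<Rightarrow> real measure"
  assumes prob: "\<And>i. i < n \<Longrightarrow> prob_space (G i)"
    and sG: "\<And>i. i < n \<Longrightarrow> sets (G i) = sets borel"
    and intG: "\<And>i. i < n \<Longrightarrow> integrable (G i) (\<lambda>t. t)"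
begin

abbreviation "P \<equiv> PiM {..<n} G"

lemma probP: "prob_space P"
  by (rule prob_space_PiM) (auto intro: prob)

lemma spaceG: "i < n \<Longrightarrow> space (G i) = UNIV"
proof -
  assume "i < n"
  have "space (G i) = space borel" by (rule sets_eq_imp_space_eq[OF sG[OF \<open>i < n\<close>]])
  then show ?thesis by simp
qed

lemma space_upd: "a \<in> space P \<Longrightarrow> i < n \<Longrightarrow> a(i := s) \<in> space P"
proof -
  assume a: "a \<in> space P" and i: "i < n"
  have "a(i := s) \<in> PiE (insert i {..<n}) (\<lambda>i. space (G i))"
    by (rule PiE_fun_upd) (use a i spaceG in \<open>auto simp: space_PiM\<close>)
  moreover have "insert i {..<n} = {..<n}" using i by auto
  ultimately show ?thesis by (simp add: space_PiM)
qed

lemma meas_comp: "i < n \<Longrightarrow> (\<lambda>a. a i) \<in> borel_measurable P"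
proof -
  assume i: "i < n"
  have "(\<lambda>a. a i) \<in> measurable P (G i)" by (rule measurable_component_singleton) (use i in simp)
  then show ?thesis using measurable_cong_sets[OF refl sG[OF i], of P] by simp
qed

lemma meas_id: "i < n \<Longrightarrow> (\<lambda>t. t) \<in> borel_measurable (G i)"
  by (rule measurable_ident_sets[OF sG])

lemma int_comp: "i < n \<Longrightarrow> integrable P (\<lambda>a. a i)"
proof -
  assume i: "i < n"
  have d: "distr P (G i) (\<lambda>a. a i) = G i"
    by (rule distr_PiM_component) (use prob i in auto)
  have "integrable (distr P (G i) (\<lambda>a. a i)) (\<lambda>t. t)"
    unfolding d by (rule intG[OF i])
  moreover have "(\<lambda>a. a i) \<in> measurable P (G i)" by (rule measurable_component_singleton) (use i in simp)
  ultimately show ?thesis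
    using integrable_distr_eq[of "\<lambda>a. a i" P "G i" "\<lambda>t. t"] meas_id[OF i] by simp
qed

definition D :: "((nat \<Rightarrow> real) \<Rightarrow> real) \<Rightarrow> bool" where
  "D h \<longleftrightarrow> h \<in> borel_measurable P \<and> (\<exists>C. \<forall>a\<in>space P. \<bar>h a\<bar> \<le> C * (1 + (\<Sum>j<n. \<bar>a j\<bar>)))"

lemma S_nonneg: "0 \<le> (\<Sum>j<n. \<bar>(a::nat\<Rightarrow>real) j\<bar>)" by (rule sum_nonneg) simp

lemma D_I: "h \<in> borel_measurable P \<Longrightarrow> (\<And>a. a \<in> space P \<Longrightarrow> \<bar>h a\<bar> \<le> C * (1 + (\<Sum>j<n. \<bar>a j\<bar>))) \<Longrightarrow> D h"
  unfolding D_def by blast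

lemma D_E:
  assumes "D h"
  obtains C where "h \<in> borel_measurable P" "C \<ge> 0" "\<And>a. a \<in> space P \<Longrightarrow> \<bar>h a\<bar> \<le> C * (1 + (\<Sum>j<n. \<bar>a j\<bar>))"
proof -
  obtain C where m: "h \<in> borel_measurable P" and C: "\<And>a. a \<in> space P \<Longrightarrow> \<bar>h a\<bar> \<le> C * (1 + (\<Sum>j<n. \<bar>a j\<bar>))"
    using assms unfolding D_def by blast
  have *: "\<bar>h a\<bar> \<le> \<bar>C\<bar> * (1 + (\<Sum>j<n. \<bar>a j\<bar>))" if "a \<in> space P" for a
  proof -
    have "C * (1 + (\<Sum>j<n. \<bar>a j\<bar>)) \<le> \<bar>C\<bar> * (1 + (\<Sum>j<n. \<bar>a j\<bar>))"
      using S_nonneg[of a] by (intro mult_right_mono) auto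
    then show ?thesis using C[OF that] by linarith
  qed
  show ?thesis by (rule that[OF m abs_ge_zero *])
qed

lemma int_bound: "integrable P (\<lambda>a. C * (1 + (\<Sum>j<n. \<bar>a j\<bar>)))"
proof -
  interpret p: prob_space P by (rule probP)
  have "integrable P (\<lambda>a. \<Sum>j<n. \<bar>a j\<bar>)"
  proof (rule Bochner_Integration.integrable_sum)
    fix i assume "i \<in> {..<n}"
    then show "integrable P (\<lambda>a. \<bar>a i\<bar>)" using int_comp by (auto intro: integrable_abs)
  qed
  then have "integrable P (\<lambda>a. 1 + (\<Sum>j<n. \<bar>a j\<bar>))"
    by (rule Bochner_Integration.integrable_add[OF p.integrable_const])
  then show ?thesis by (rule Bochner_Integration.integrable_mult_right)
qed

lemma D_int: "D h \<Longrightarrow> integrable P h"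
proof -
  assume "D h"
  then obtain C where m: "h \<in> borel_measurable P" and C: "\<And>a. a \<in> space P \<Longrightarrow> \<bar>h a\<bar> \<le> C * (1 + (\<Sum>j<n. \<bar>a j\<bar>))"
    by (metis D_E)
  show ?thesis
  proof (rule Bochner_Integration.integrable_bound[OF int_bound[of C] m])
    show "AE x in P. norm (h x) \<le> norm (C * (1 + (\<Sum>j<n. \<bar>x j\<bar>)))" using C by (auto intro!: AE_I2 order_trans[OF C abs_ge_self])
  qed
qed

lemma D_meas: "D h \<Longrightarrow> h \<in> borel_measurable P" by (simp add: D_def)

lemma D_const: "D (\<lambda>a. c)"
proof (rule D_I)
  fix a show "\<bar>c\<bar> \<le> \<bar>c\<bar> * (1 + (\<Sum>j<n. \<bar>a j\<bar>))"
    using S_nonneg[of a] by (simp add: algebra_simps)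
qed simp

lemma D_add: "D f \<Longrightarrow> D g \<Longrightarrow> D (\<lambda>a. f a + g a)"
proof -
  assume "D f" "D g"
  then obtain C1 C2 where m: "f \<in> borel_measurable P" "g \<in> borel_measurable P"
    and b: "\<And>a. a \<in> space P \<Longrightarrow> \<bar>f a\<bar> \<le> C1 * (1 + (\<Sum>j<n. \<bar>a j\<bar>))"
      "\<And>a. a \<in> space P \<Longrightarrow> \<bar>g a\<bar> \<le> C2 * (1 + (\<Sum>j<n. \<bar>a j\<bar>))"
    by (metis D_E)
  show ?thesis
  proof (rule D_I[where C="C1 + C2"])
    fix a assume "a \<in> space P"
    from b[OF this] show "\<bar>f a + g a\<bar> \<le> (C1 + C2) * (1 + (\<Sum>j<n. \<bar>a j\<bar>))"
      by (simp add: algebra_simps)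
  qed (use m in simp)
qed

lemma D_neg: "D f \<Longrightarrow> D (\<lambda>a. - f a)"
  unfolding D_def by auto

lemma D_diff: "D f \<Longrightarrow> D g \<Longrightarrow> D (\<lambda>a. f a - g a)"
  using D_add[OF _ D_neg[of g]] by simp

lemma D_max: "D f \<Longrightarrow> D g \<Longrightarrow> D (\<lambda>a. max (f a) (g a))"
proof -
  assume "D f" "D g"
  then obtain C1 C2 where m: "f \<in> borel_measurable P" "g \<in> borel_measurable P"
    and b: "\<And>a. a \<in> space P \<Longrightarrow> \<bar>f a\<bar> \<le> C1 * (1 + (\<Sum>j<n. \<bar>a j\<bar>))"
      "\<And>a. a \<in> space P \<Longrightarrow> \<bar>g a\<bar> \<le> C2 * (1 + (\<Sum>j<n. \<bar>a j\<bar>))"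
      "C1 \<ge> 0" "C2 \<ge> 0"
    by (metis D_E)
  show ?thesis
  proof (rule D_I[where C="C1 + C2"])
    fix a assume a: "a \<in> space P"
    have "0 \<le> C1 * (1 + (\<Sum>j<n. \<bar>a j\<bar>))" "0 \<le> C2 * (1 + (\<Sum>j<n. \<bar>a j\<bar>))"
      using b(3,4) S_nonneg[of a] by auto
    with b(1,2)[OF a] show "\<bar>max (f a) (g a)\<bar> \<le> (C1 + C2) * (1 + (\<Sum>j<n. \<bar>a j\<bar>))"
      by (simp add: algebra_simps abs_le_iff max_def)
  qed (use m in simp)
qed

lemma D_if: "D f \<Longrightarrow> Measurable.pred P Q \<Longrightarrow> D (\<lambda>a. if Q a then f a else 0)"
proof -
  assume "D f" and q: "Measurable.pred P Q"
  then obtain C where m: "f \<in> borel_measurable P" and "C \<ge> 0" and b: "\<And>a. a \<in> space P \<Longrightarrow> \<bar>f a\<bar> \<le> C * (1 + (\<Sum>j<n. \<bar>a j\<bar>))"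
    by (metis D_E)
  show ?thesis
  proof (rule D_I[where C=C])
    fix a assume a: "a \<in> space P"
    have "0 \<le> C * (1 + (\<Sum>j<n. \<bar>a j\<bar>))" using \<open>C \<ge> 0\<close> S_nonneg[of a] by auto
    with b[OF a] show "\<bar>if Q a then f a else 0\<bar> \<le> C * (1 + (\<Sum>j<n. \<bar>a j\<bar>))" by auto
  qed (use m q in \<open>intro measurable_If\<close>, auto)
qed

lemma D_topsum:
  assumes "A \<subseteq> {..<n}" "m \<le> card A"
  shows "D (topsum m A)"
proof -
  have fA: "finite A" using assms(1) finite_subset by blast
  have fam: "finite {B. B \<subseteq> A \<and> card B = m}" using topsum_fam[OF fA assms(2)] by simp
  have "(\<lambda>a. topsum m A a) \<in> borel_measurable P"
    unfolding topsum_def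
  proof (rule borel_measurable_Max[OF fam])
    fix B assume "B \<in> {B. B \<subseteq> A \<and> card B = m}"
    then show "(\<lambda>a. \<Sum>i\<in>B. a i) \<in> borel_measurable P" using assms(1) meas_comp
      by (intro borel_measurable_sum) auto
  qed
  moreover have "\<bar>topsum m A a\<bar> \<le> 1 * (1 + (\<Sum>j<n. \<bar>a j\<bar>))" for a
  proof -
    have "\<bar>topsum m A a\<bar> \<le> (\<Sum>i\<in>A. \<bar>a i\<bar>)" by (rule topsum_abs[OF fA assms(2)])
    also have "\<dots> \<le> (\<Sum>j<n. \<bar>a j\<bar>)" using assms(1) by (intro sum_mono2) auto
    finally show ?thesis by simp
  qed
  ultimately show ?thesis unfolding D_def by blast
qed


lemma meas_upd: "i < n \<Longrightarrow> (\<lambda>(a, s). a(i := s)) \<in> measurable (P \<Otimes>\<^sub>M G i) P"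
proof -
  assume i: "i < n"
  have "insert i {..<n} = {..<n}" using i by auto
  then show ?thesis using measurable_add_dim[of i "{..<n}" G] by simp
qed

lemma sum_upd: "i < n \<Longrightarrow> (\<Sum>j<n. \<bar>(a(i := s)) j\<bar>) = \<bar>s\<bar> + (\<Sum>j\<in>{..<n}-{i}. \<bar>a j\<bar>)"
proof -
  assume i: "i < n"
  have "(\<Sum>j<n. \<bar>(a(i := s)) j\<bar>) = \<bar>(a(i := s)) i\<bar> + (\<Sum>j\<in>{..<n}-{i}. \<bar>(a(i := s)) j\<bar>)"
    using i by (subst sum.remove[of _ i]) auto
  also have "(\<Sum>j\<in>{..<n}-{i}. \<bar>(a(i := s)) j\<bar>) = (\<Sum>j\<in>{..<n}-{i}. \<bar>a j\<bar>)"
    by (rule sum.cong) auto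
  finally show ?thesis by simp
qed

lemma resample_D:
  assumes i: "i < n" and h: "D h"
  shows "D (\<lambda>a. \<integral>s. h (a(i := s)) \<partial>G i)"
proof -
  interpret Gi: prob_space "G i" using prob i by blast
  obtain C where hm: "h \<in> borel_measurable P" and C0: "C \<ge> 0"
    and hb: "\<And>a. a \<in> space P \<Longrightarrow> \<bar>h a\<bar> \<le> C * (1 + (\<Sum>j<n. \<bar>a j\<bar>))"
    using h by (metis D_E)
  have m2: "(\<lambda>(a, s). h (a(i := s))) \<in> borel_measurable (P \<Otimes>\<^sub>M G i)"
    using measurable_comp[OF meas_upd[OF i] hm] by (simp add: comp_def case_prod_beta')
  have meas: "(\<lambda>a. \<integral>s. h (a(i := s)) \<partial>G i) \<in> borel_measurable P"
    by (rule Gi.borel_measurable_lebesgue_integral) (use m2 in simp)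
  define E where "E = (\<integral>s. \<bar>s\<bar> \<partial>G i)"
  have E0: "E \<ge> 0" unfolding E_def by simp
  have intabs: "integrable (G i) (\<lambda>s. \<bar>s\<bar>)" using intG[OF i] by (rule integrable_abs)
  show ?thesis
  proof (rule D_I[OF meas, where C="C * (1 + E)"])
    fix a assume a: "a \<in> space P"
    define SJ where "SJ = (\<Sum>j\<in>{..<n}-{i}. \<bar>a j\<bar>)"
    have SJ0: "SJ \<ge> 0" unfolding SJ_def by (rule sum_nonneg) simp
    have SJle: "SJ \<le> (\<Sum>j<n. \<bar>a j\<bar>)" unfolding SJ_def by (rule sum_mono2) auto
    define u where "u s = C * (1 + SJ) + C * \<bar>s\<bar>" for s :: real
    have uint: "integrable (G i) u" unfolding u_def
      by (rule Bochner_Integration.integrable_add[OF Gi.integrable_const Bochner_Integration.integrable_mult_right[OF intabs]])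
    have uI: "(\<integral>s. u s \<partial>G i) = C * (1 + SJ) + C * E"
      unfolding u_def E_def using intabs by (simp add: Gi.prob_space)
    have u0: "u s \<ge> 0" for s unfolding u_def using C0 SJ0 by simp
    have hb2: "\<bar>h (a(i := s))\<bar> \<le> u s" for s
    proof -
      have "\<bar>h (a(i := s))\<bar> \<le> C * (1 + (\<Sum>j<n. \<bar>(a(i := s)) j\<bar>))" by (rule hb[OF space_upd[OF a i]])
      also have "\<dots> = u s" unfolding u_def sum_upd[OF i] SJ_def by (simp add: algebra_simps)
      finally show ?thesis .
    qed
    have up: "(\<integral>s. h (a(i := s)) \<partial>G i) \<le> (\<integral>s. u s \<partial>G i)"
      by (rule integral_mono'[OF uint]) (use hb2 u0 in \<open>auto simp: abs_le_iff\<close>)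
    have lo: "(\<integral>s. - h (a(i := s)) \<partial>G i) \<le> (\<integral>s. u s \<partial>G i)"
      by (rule integral_mono'[OF uint]) (use hb2 u0 in \<open>auto simp: abs_le_iff\<close>)
    have "\<bar>\<integral>s. h (a(i := s)) \<partial>G i\<bar> \<le> C * (1 + SJ) + C * E"
      using up lo uI by (simp add: abs_le_iff)
    also have "\<dots> \<le> C * (1 + E) * (1 + (\<Sum>j<n. \<bar>a j\<bar>))"
    proof -
      have eq: "(1 + E) * (1 + (\<Sum>j<n. \<bar>a j\<bar>)) = 1 + (\<Sum>j<n. \<bar>a j\<bar>) + E + E * (\<Sum>j<n. \<bar>a j\<bar>)"
        by (simp add: algebra_simps)
      have "E * (\<Sum>j<n. \<bar>a j\<bar>) \<ge> 0" using E0 S_nonneg[of a] by simp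
      then have "1 + SJ + E \<le> (1 + E) * (1 + (\<Sum>j<n. \<bar>a j\<bar>))"
        unfolding eq using SJle by linarith
      then show ?thesis using C0 by (metis distrib_left mult.assoc mult_left_mono)
    qed
    finally show "\<bar>\<integral>s. h (a(i := s)) \<partial>G i\<bar> \<le> C * (1 + E) * (1 + (\<Sum>j<n. \<bar>a j\<bar>))" .
  qed
qed


lemma resample_eq:
  assumes i: "i < n" and h: "D h"
  shows "(\<integral>a. h a \<partial>P) = (\<integral>a. (\<integral>s. h (a(i := s)) \<partial>G i) \<partial>P)"
proof -
  define G' where "G' j = (if j < n then G j else return borel 0)" for j
  have pG': "prob_space (G' j)" for j
    unfolding G'_def using prob by (auto intro: prob_space_return)
  interpret ps: product_sigma_finite G'
    by (rule product_sigma_finite.intro) (rule prob_space_imp_sigma_finite[OF pG'])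
  interpret Gi: prob_space "G i" using prob i by blast
  define J where "J = {..<n} - {i}"
  have IJ: "insert i J = {..<n}" using i unfolding J_def by auto
  have fJ: "finite J" "i \<notin> J" unfolding J_def by auto
  have PG: "PiM {..<n} G' = P" by (rule PiM_cong) (auto simp: G'_def)
  have G'i: "G' i = G i" using i by (simp add: G'_def)
  define g where "g a = (\<integral>s. h (a(i := s)) \<partial>G i)" for a
  have Dg: "D g" unfolding g_def by (rule resample_D[OF i h])
  have "(\<integral>a. h a \<partial>P) = (\<integral>a. h a \<partial>PiM (insert i J) G')" by (simp add: IJ PG)
  also have "\<dots> = (\<integral>x. (\<integral>y. h (x(i := y)) \<partial>G' i) \<partial>PiM J G')"
    by (rule ps.product_integral_insert[OF fJ]) (simp add: IJ PG D_int[OF h])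
  also have "\<dots> = (\<integral>x. g x \<partial>PiM J G')" by (simp add: G'i g_def)
  finally have 1: "(\<integral>a. h a \<partial>P) = (\<integral>x. g x \<partial>PiM J G')" .
  have "(\<integral>a. g a \<partial>P) = (\<integral>a. g a \<partial>PiM (insert i J) G')" by (simp add: IJ PG)
  also have "\<dots> = (\<integral>x. (\<integral>y. g (x(i := y)) \<partial>G' i) \<partial>PiM J G')"
    by (rule ps.product_integral_insert[OF fJ]) (simp add: IJ PG D_int[OF Dg])
  also have "\<dots> = (\<integral>x. g x \<partial>PiM J G')" by (simp add: G'i g_def Gi.prob_space)
  finally show ?thesis using 1 by (simp add: g_def)
qed

lemma D_congr': "D f \<Longrightarrow> (\<And>a. f a = g a) \<Longrightarrow> D g"
proof -
  assume "D f" "\<And>a. f a = g a"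
  then have "f = g" by auto
  with \<open>D f\<close> show ?thesis by simp
qed

lemma pred_le: "f \<in> borel_measurable P \<Longrightarrow> Measurable.pred P (\<lambda>a. f a \<le> (c::real))"
proof -
  assume f: "f \<in> borel_measurable P"
  show ?thesis unfolding pred_def by (rule borel_measurable_le[OF f borel_measurable_const])
qed

lemma D_ifte: "D f \<Longrightarrow> D g \<Longrightarrow> Measurable.pred P Q \<Longrightarrow> D (\<lambda>a. if Q a then f a else g a)"
proof -
  assume f: "D f" and g: "D g" and q: "Measurable.pred P Q"
  have q': "Measurable.pred P (\<lambda>a. \<not> Q a)" using q by (rule pred_intros_logic)
  have "D (\<lambda>a. (if Q a then f a else 0) + (if \<not> Q a then g a else 0))"
    by (rule D_add[OF D_if[OF f q] D_if[OF g q']])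
  then show ?thesis by (rule D_congr') simp
qed

end


locale gcI = gcb +
  fixes k :: nat and ov :: "nat \<Rightarrow> real" and I :: "nat list"
  assumes kn: "k \<le> n" and dI: "distinct I" and lI: "length I = k" and sI: "set I \<subseteq> {..<n}"
begin

abbreviation "w t \<equiv> wC n k G ov I t"
abbreviation "R t \<equiv> Rc n k ov I t"

fun Phi :: "nat \<Rightarrow> (nat \<Rightarrow> real) \<Rightarrow> real" where
  "Phi 0 a = topsum k {..<n} a"
| "Phi (Suc t) a = max (ov (I ! t) + R t a) (w t a + R t a)"

lemma Inth: "t < k \<Longrightarrow> I ! t < n"
proof -
  assume "t < k"
  then have "I ! t \<in> set I" using lI by (intro nth_mem) simp
  then show ?thesis using sI by blast
qed

lemma compl_sub: "{..<n} - set (take s I) \<subseteq> {..<n}" by blast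

lemma card_compl: "s \<le> k \<Longrightarrow> card ({..<n} - set (take s I)) = n - s"
proof -
  assume s: "s \<le> k"
  have c: "card (set (take s I)) = s"
  proof -
    have "length (take s I) = s" using s lI by simp
    then show ?thesis using distinct_card[OF distinct_take[OF dI, of s]] by simp
  qed
  have sub: "set (take s I) \<subseteq> {..<n}" by (rule order_trans[OF set_take_subset sI])
  have "card ({..<n} - set (take s I)) = card {..<n} - card (set (take s I))"
    by (rule card_Diff_subset) (simp, rule sub)
  then show ?thesis using c by simp
qed

lemma D_congr: "D f \<Longrightarrow> (\<And>a. f a = g a) \<Longrightarrow> D g"
proof -
  assume "D f" "\<And>a. f a = g a"
  then have "f = g" by auto
  with \<open>D f\<close> show ?thesis by simp
qed

lemma D_R: "t < k \<Longrightarrow> D (R t)"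
proof -
  assume t: "t < k"
  have "D (topsum (k - Suc t) ({..<n} - set (take (Suc t) I)))"
    by (rule D_topsum[OF compl_sub]) (use card_compl[of "Suc t"] t kn in simp)
  then have "D (\<lambda>a. (\<Sum>j<t. ov (I ! j)) + topsum (k - Suc t) ({..<n} - set (take (Suc t) I)) a)"
    by (rule D_add[OF D_const])
  then show ?thesis by (rule D_congr) (simp add: Rc_def)
qed

lemma R_inv: "j \<in> set (take (Suc t) I) \<Longrightarrow> R t (a(j := v)) = R t a"
  unfolding Rc_def by (simp add: topsum_upd)

lemma U_eq: "w t a + R t a = (\<integral>s. Phi t (a(I ! t := s)) \<partial>G (I ! t))"
  by (cases t) simp_all

lemma D_Phi: "t \<le> k \<Longrightarrow> D (Phi t) \<and> (t > 0 \<longrightarrow> D (w (t - 1)))"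
proof (induction t)
  case 0
  have "D (topsum k {..<n})" by (rule D_topsum) (use kn in auto)
  then show ?case by simp
next
  case (Suc t)
  then have t: "t < k" by simp
  from Suc have Dp: "D (Phi t)" by simp
  have DU: "D (\<lambda>a. w t a + R t a)"
    by (rule D_congr[OF resample_D[OF Inth[OF t] Dp]]) (simp add: U_eq)
  have Dw: "D (w t)" by (rule D_congr[OF D_diff[OF DU D_R[OF t]]]) simp
  have "D (\<lambda>a. max (ov (I ! t) + R t a) (w t a + R t a))"
    by (rule D_max[OF D_add[OF D_const D_R[OF t]] DU])
  then have DP: "D (Phi (Suc t))" by (rule D_congr) simp
  show ?case
  proof (intro conjI impI)
    show "D (Phi (Suc t))" by (rule DP)
    show "D (w (Suc t - 1))" using Dw by simp
  qed
qed

lemma take_Suc_set: "t < k \<Longrightarrow> set (take (Suc t) I) = insert (I ! t) (set (take t I))"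
  using lI by (simp add: take_Suc_conv_app_nth)

lemma w_inv: "t < k \<Longrightarrow> j \<in> set (take (Suc t) I) \<Longrightarrow> w t (a(j := v)) = w t a"
proof (induction t arbitrary: a)
  case 0
  then have j: "j = I ! 0" using lI by (cases I) auto
  have Rj: "R 0 (a(j := v)) = R 0 a" by (rule R_inv[OF "0.prems"(2)])
  have "w 0 (a(j := v)) = (\<integral>s. topsum k {..<n} (a(j := v, I ! 0 := s)) \<partial>G (I ! 0)) - R 0 (a(j := v))"
    by (simp only: wC.simps)
  also have "\<dots> = (\<integral>s. topsum k {..<n} (a(I ! 0 := s)) \<partial>G (I ! 0)) - R 0 a"
    unfolding Rj unfolding j fun_upd_upd ..
  also have "\<dots> = w 0 a" by (simp only: wC.simps)
  finally show ?case .
next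
  case (Suc t)
  have R1: "R (Suc t) (a(j := v)) = R (Suc t) a" by (rule R_inv[OF Suc.prems(2)])
  show ?case
  proof (cases "j = I ! Suc t")
    case True
    show ?thesis
      unfolding wC.simps(2) R1 unfolding True fun_upd_upd ..
  next
    case False
    then have j: "j \<in> set (take (Suc t) I)" using Suc.prems take_Suc_set[of "Suc t"] by auto
    have tw: "a(j := v, I ! Suc t := s) = (a(I ! Suc t := s))(j := v)" for s using False by (rule fun_upd_twist)
    have e1: "w t (a(j := v, I ! Suc t := s)) = w t (a(I ! Suc t := s))" for s
      unfolding tw by (rule Suc.IH[OF _ j]) (use Suc.prems(1) in simp)
    have e2: "R t (a(j := v, I ! Suc t := s)) = R t (a(I ! Suc t := s))" for s
      unfolding tw by (rule R_inv[OF j])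
    show ?thesis unfolding wC.simps(2) R1 e1 e2 ..
  qed
qed

definition sst :: "nat \<Rightarrow> (nat \<Rightarrow> real) \<Rightarrow> nat" where
  "sst t a = Max ({0} \<union> {s \<in> {1..t}. ov (I ! (s - 1)) \<ge> w (s - 1) a})"

definition val :: "nat \<Rightarrow> (nat \<Rightarrow> real) \<Rightarrow> real" where
  "val s a = (\<Sum>j<s. ov (I ! j)) + topsum (k - s) ({..<n} - set (take s I)) a"

definition Val :: "nat \<Rightarrow> (nat \<Rightarrow> real) \<Rightarrow> real" where
  "Val t a = val (sst t a) a"

lemma sst_0: "sst 0 a = 0"
  unfolding sst_def by simp

lemma sst_Suc: "sst (Suc t) a = (if ov (I ! t) \<ge> w t a then Suc t else sst t a)"
proof -
  have S: "{s \<in> {1..Suc t}. ov (I ! (s - 1)) \<ge> w (s - 1) a} =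
      {s \<in> {1..t}. ov (I ! (s - 1)) \<ge> w (s - 1) a} \<union> (if ov (I ! t) \<ge> w t a then {Suc t} else {})"
    by (auto simp: le_Suc_eq)
  show ?thesis
  proof (cases "ov (I ! t) \<ge> w t a")
    case True
    have "Max ({0} \<union> {s \<in> {1..Suc t}. ov (I ! (s - 1)) \<ge> w (s - 1) a}) = Suc t"
      by (rule Max_eqI) (use True in auto)
    then show ?thesis using True unfolding sst_def by simp
  next
    case False
    then show ?thesis unfolding sst_def S by simp
  qed
qed

lemma Val_0: "Val 0 a = topsum k {..<n} a"
  unfolding Val_def sst_0 val_def by simp

lemma Val_Suc: "Val (Suc t) a = (if ov (I ! t) \<ge> w t a then ov (I ! t) + R t a else Val t a)"
proof (cases "ov (I ! t) \<ge> w t a")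
  case True
  have "val (Suc t) a = ov (I ! t) + R t a" unfolding val_def Rc_def by simp
  then show ?thesis using True unfolding Val_def sst_Suc by simp
next
  case False
  then show ?thesis unfolding Val_def sst_Suc by simp
qed

lemma Phi_Suc': "Phi (Suc t) a = (if ov (I ! t) \<ge> w t a then ov (I ! t) + R t a else w t a + R t a)"
  by (simp add: max_def)

lemma D_w: "t < k \<Longrightarrow> D (w t)"
  using D_Phi[of "Suc t"] by simp

lemma pred_c: "t < k \<Longrightarrow> Measurable.pred P (\<lambda>a. w t a \<le> ov (I ! t))"
  by (rule pred_le) (rule D_meas[OF D_w])

lemma D_Val: "t \<le> k \<Longrightarrow> D (Val t)"
proof (induction t)
  case 0
  have "D (topsum k {..<n})" by (rule D_topsum) (use kn in auto)
  then show ?case by (rule D_congr) (simp add: Val_0)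
next
  case (Suc t)
  then have t: "t < k" by simp
  have "D (\<lambda>a. if w t a \<le> ov (I ! t) then ov (I ! t) + R t a else Val t a)"
    by (rule D_ifte[OF D_add[OF D_const D_R[OF t]] _ pred_c[OF t]]) (use Suc t in simp)
  then show ?case by (rule D_congr) (simp add: Val_Suc)
qed

lemma int_if_const:
  "(\<integral>s. (if b then f s else 0) \<partial>M) = (if b then (\<integral>s. f s \<partial>M) else (0::real))"
  by (cases b) simp_all

lemma claim:
  "t \<le> k \<Longrightarrow> Measurable.pred P Q \<Longrightarrow> (\<And>a j v. j \<in> set (take t I) \<Longrightarrow> Q (a(j := v)) = Q a) \<Longrightarrow>
   (\<integral>a. (if Q a then Val t a else 0) \<partial>P) = (\<integral>a. (if Q a then Phi t a else 0) \<partial>P)"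
proof (induction t arbitrary: Q)
  case 0
  show ?case by (intro Bochner_Integration.integral_cong) (simp_all add: Val_0)
next
  case (Suc t)
  then have t: "t < k" by simp
  note q = Suc.prems(2)
  note inv = Suc.prems(3)
  let ?c = "\<lambda>a. w t a \<le> ov (I ! t)"
  let ?i = "I ! t"
  have pc: "Measurable.pred P ?c" by (rule pred_c[OF t])
  have pnc: "Measurable.pred P (\<lambda>a. \<not> ?c a)" using pc by (rule pred_intros_logic)
  have q1: "Measurable.pred P (\<lambda>a. Q a \<and> ?c a)" using q pc by (rule pred_intros_logic)
  have q2: "Measurable.pred P (\<lambda>a. Q a \<and> \<not> ?c a)" using q pnc by (rule pred_intros_logic)
  have DA: "D (\<lambda>a. ov (I ! t) + R t a)" by (rule D_add[OF D_const D_R[OF t]])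
  have DV: "D (Val t)" by (rule D_Val) (use t in simp)
  have DP: "D (Phi t)" using D_Phi[of t] t by simp
  have DU: "D (\<lambda>a. w t a + R t a)" by (rule D_add[OF D_w[OF t] D_R[OF t]])
  have i: "?i < n" by (rule Inth[OF t])
  have iin: "?i \<in> set (take (Suc t) I)" using take_Suc_set[OF t] by simp
  have sub: "set (take t I) \<subseteq> set (take (Suc t) I)" using take_Suc_set[OF t] by auto
  have cinv: "?c (a(j := v)) = ?c a" if "j \<in> set (take (Suc t) I)" for a j v
    by (simp only: w_inv[OF t that])
  have inv2: "(Q (a(j := v)) \<and> \<not> ?c (a(j := v))) = (Q a \<and> \<not> ?c a)" if "j \<in> set (take (Suc t) I)" for a j v
  proof -
    have e1: "Q (a(j := v)) = Q a" by (rule inv[OF that])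
    have e2: "?c (a(j := v)) = ?c a" by (rule cinv[OF that])
    show ?thesis by (simp only: e1 e2)
  qed
  have "(\<integral>a. (if Q a then Val (Suc t) a else 0) \<partial>P) =
        (\<integral>a. (if Q a \<and> ?c a then ov (I ! t) + R t a else 0) + (if Q a \<and> \<not> ?c a then Val t a else 0) \<partial>P)"
    by (rule Bochner_Integration.integral_cong) (auto simp: Val_Suc)
  also have "\<dots> = (\<integral>a. (if Q a \<and> ?c a then ov (I ! t) + R t a else 0) \<partial>P) + (\<integral>a. (if Q a \<and> \<not> ?c a then Val t a else 0) \<partial>P)"
    by (rule Bochner_Integration.integral_add[OF D_int[OF D_if[OF DA q1]] D_int[OF D_if[OF DV q2]]])
  also have "(\<integral>a. (if Q a \<and> \<not> ?c a then Val t a else 0) \<partial>P) = (\<integral>a. (if Q a \<and> \<not> ?c a then Phi t a else 0) \<partial>P)"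
  proof (rule Suc.IH[OF _ q2])
    show "t \<le> k" using t by simp
    fix a j v assume "j \<in> set (take t I)"
    then have "j \<in> set (take (Suc t) I)" using sub by (rule subsetD[rotated])
    then show "(Q (a(j := v)) \<and> \<not> ?c (a(j := v))) = (Q a \<and> \<not> ?c a)" by (rule inv2)
  qed
  also have "\<dots> = (\<integral>a. (\<integral>s. (if Q (a(?i := s)) \<and> \<not> ?c (a(?i := s)) then Phi t (a(?i := s)) else 0) \<partial>G ?i) \<partial>P)"
    by (rule resample_eq[OF i D_if[OF DP q2]])
  also have "\<dots> = (\<integral>a. (if Q a \<and> \<not> ?c a then w t a + R t a else 0) \<partial>P)"
  proof (rule Bochner_Integration.integral_cong[OF refl])
    fix a
    have "(\<integral>s. (if Q (a(?i := s)) \<and> \<not> ?c (a(?i := s)) then Phi t (a(?i := s)) else 0) \<partial>G ?i)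
        = (\<integral>s. (if Q a \<and> \<not> ?c a then Phi t (a(?i := s)) else 0) \<partial>G ?i)"
      using inv2[OF iin] by simp
    also have "\<dots> = (if Q a \<and> \<not> ?c a then w t a + R t a else 0)"
      by (simp only: int_if_const U_eq)
    finally show "(\<integral>s. (if Q (a(?i := s)) \<and> \<not> ?c (a(?i := s)) then Phi t (a(?i := s)) else 0) \<partial>G ?i)
        = (if Q a \<and> \<not> ?c a then w t a + R t a else 0)" .
  qed
  also have "(\<integral>a. (if Q a \<and> ?c a then ov (I ! t) + R t a else 0) \<partial>P) + \<dots> =
      (\<integral>a. (if Q a \<and> ?c a then ov (I ! t) + R t a else 0) + (if Q a \<and> \<not> ?c a then w t a + R t a else 0) \<partial>P)"
    by (rule Bochner_Integration.integral_add[symmetric, OF D_int[OF D_if[OF DA q1]] D_int[OF D_if[OF DU q2]]])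
  also have "\<dots> = (\<integral>a. (if Q a then Phi (Suc t) a else 0) \<partial>P)"
    by (rule Bochner_Integration.integral_cong) (auto simp: Phi_Suc')
  finally show ?case .
qed

lemma OBJI_Val: "OBJ_GC_I n k G ov I = (\<integral>a. Val k a \<partial>P)"
  unfolding OBJ_GC_I_def profile_dist_def Val_def val_def sst_def sstar_def Let_def ..

lemma OBJI_Phi: "OBJ_GC_I n k G ov I = (\<integral>a. Phi k a \<partial>P)"
proof -
  have pT: "Measurable.pred P (\<lambda>a. True)" by simp
  have "(\<integral>a. (if True then Val k a else 0) \<partial>P) = (\<integral>a. (if True then Phi k a else 0) \<partial>P)"
    by (rule claim[OF order_refl pT]) simp
  then show ?thesis unfolding OBJI_Val by simp
qed

lemma Phi_step: "t < k \<Longrightarrow> (\<integral>a. Phi t a \<partial>P) \<le> (\<integral>a. Phi (Suc t) a \<partial>P)"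
proof -
  assume t: "t < k"
  have DP: "D (Phi t)" using D_Phi[of t] t by simp
  have DP2: "D (Phi (Suc t))" using D_Phi[of "Suc t"] t by simp
  have DU: "D (\<lambda>a. w t a + R t a)" by (rule D_add[OF D_w[OF t] D_R[OF t]])
  have "(\<integral>a. Phi t a \<partial>P) = (\<integral>a. (\<integral>s. Phi t (a(I ! t := s)) \<partial>G (I ! t)) \<partial>P)"
    by (rule resample_eq[OF Inth[OF t] DP])
  also have "\<dots> = (\<integral>a. w t a + R t a \<partial>P)" by (simp only: U_eq)
  also have "\<dots> \<le> (\<integral>a. Phi (Suc t) a \<partial>P)"
    by (rule integral_mono[OF D_int[OF DU] D_int[OF DP2]]) simp
  finally show ?thesis .
qed

lemma Phi_chain: "t \<le> k \<Longrightarrow> (\<integral>a. topsum k {..<n} a \<partial>P) \<le> (\<integral>a. Phi t a \<partial>P)"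
proof (induction t)
  case 0
  then show ?case by simp
next
  case (Suc t)
  then show ?case using Phi_step[of t] by simp
qed

lemma OBJI_ge_ads: "(\<integral>a. topsum k {..<n} a \<partial>P) \<le> OBJ_GC_I n k G ov I"
  unfolding OBJI_Phi by (rule Phi_chain[OF order_refl])

lemma OBJI_ge_org: "(\<Sum>j<k. ov (I ! j)) \<le> OBJ_GC_I n k G ov I"
proof -
  interpret p: prob_space P by (rule probP)
  have pt: "(\<Sum>j<k. ov (I ! j)) \<le> Phi k a" for a
  proof (cases k)
    case 0
    have "Phi k a = Phi 0 a" using arg_cong[of k 0 "\<lambda>t. Phi t a"] 0 by blast
    also have "\<dots> = topsum k {..<n} a" by simp
    also have "\<dots> = topsum 0 {..<n} a" using arg_cong[of k 0 "\<lambda>t. topsum t {..<n} a"] 0 by blast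
    also have "\<dots> = 0" by (simp add: topsum_zero)
    finally show ?thesis using 0 by simp
  next
    case (Suc m)
    have "R m a = (\<Sum>j<m. ov (I ! j)) + topsum (k - Suc m) ({..<n} - set (take (Suc m) I)) a"
      unfolding Rc_def ..
    also have "topsum (k - Suc m) ({..<n} - set (take (Suc m) I)) a = topsum 0 ({..<n} - set (take (Suc m) I)) a"
      using Suc by simp
    also have "\<dots> = 0" by (simp add: topsum_zero)
    finally have Rm: "R m a = (\<Sum>j<m. ov (I ! j))" by simp
    have "Phi k a = Phi (Suc m) a" using arg_cong[of k "Suc m" "\<lambda>t. Phi t a"] Suc by blast
    also have "\<dots> \<ge> ov (I ! m) + R m a" by simp
    finally have "ov (I ! m) + R m a \<le> Phi k a" .
    moreover have "(\<Sum>j<k. ov (I ! j)) = (\<Sum>j<m. ov (I ! j)) + ov (I ! m)" using Suc by simp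
    ultimately show ?thesis using Rm by simp
  qed
  have DP: "D (Phi k)" using D_Phi[of k] by simp
  have "(\<integral>a. (\<Sum>j<k. ov (I ! j)) \<partial>P) \<le> (\<integral>a. Phi k a \<partial>P)"
    by (rule integral_mono[OF p.integrable_const D_int[OF DP]]) (rule pt)
  then show ?thesis unfolding OBJI_Phi by (simp add: p.prob_space)
qed

end


lemma extend_set:
  assumes "Z \<subseteq> {..<n}" "card Z \<le> k" "k \<le> (n::nat)"
  obtains Z' where "Z \<subseteq> Z'" "Z' \<subseteq> {..<n}" "card Z' = k"
proof -
  have fZ: "finite Z" by (rule finite_subset[OF assms(1) finite_lessThan])
  have "card ({..<n} - Z) = n - card Z" using assms(1) fZ by (simp add: card_Diff_subset)
  then have "k - card Z \<le> card ({..<n} - Z)" using assms by simp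
  then obtain T where T: "T \<subseteq> {..<n} - Z" "card T = k - card Z" by (metis obtain_subset_with_card_n)
  have fT: "finite T" by (rule finite_subset[OF T(1)]) simp
  have dis: "Z \<inter> T = {}" using T(1) by auto
  have "card (Z \<union> T) = k" using card_Un_disjoint[OF fZ fT dis] T(2) assms(2) by simp
  moreover have "Z \<union> T \<subseteq> {..<n}" using T(1) assms(1) by auto
  ultimately show ?thesis by (intro that[of "Z \<union> T"]) auto
qed

lemma sum_list_nth: "distinct I \<Longrightarrow> (\<Sum>j<length I. f (I ! j)) = (\<Sum>i\<in>set I. (f i::real))"
proof -
  assume d: "distinct I"
  have "(\<Sum>i\<in>set I. f i) = sum_list (map f I)" by (rule sum_list_distinct_conv_sum_set[OF d, symmetric])
  also have "\<dots> = (\<Sum>j = 0..<length I. f (I ! j))" by (simp add: sum_list_sum_nth)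
  finally show ?thesis by (simp add: atLeast0LessThan)
qed

lemma pointwise_bound:
  fixes x y :: "(nat \<Rightarrow> real) \<Rightarrow> nat \<Rightarrow> bool" and a :: "nat \<Rightarrow> real"
  assumes kn: "k \<le> n" and feas: "feasible_mech n k x y"
    and anon: "\<And>i. i < n \<Longrightarrow> a i \<ge> 0" and onon: "\<And>i. i < n \<Longrightarrow> ov i \<ge> 0"
    and Sge: "\<And>I. distinct I \<Longrightarrow> length I = k \<Longrightarrow> set I \<subseteq> {..<n} \<Longrightarrow> (\<Sum>j<k. ov (I ! j)) \<le> S"
  shows "(\<Sum>i<n. (if x a i then a i else 0) + (if y a i then ov i else 0)) \<le> topsum k {..<n} a + S"
proof -
  define X where "X = {i \<in> {..<n}. x a i}"
  define Y where "Y = {i \<in> {..<n}. y a i}"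
  have c0: "card {i. i < n \<and> x a i} + card {i. i < n \<and> y a i} \<le> k"
    using feas unfolding feasible_mech_def by blast
  have "X = {i. i < n \<and> x a i}" "Y = {i. i < n \<and> y a i}" unfolding X_def Y_def by auto
  then have c: "card X + card Y \<le> k" using c0 by simp
  have cX: "card X \<le> k" and cY: "card Y \<le> k" using c by linarith+
  have XS: "X \<subseteq> {..<n}" "Y \<subseteq> {..<n}" unfolding X_def Y_def by auto
  have "(\<Sum>i<n. (if x a i then a i else 0) + (if y a i then ov i else 0)) =
      (\<Sum>i<n. (if x a i then a i else 0)) + (\<Sum>i<n. (if y a i then ov i else 0))"
    by (rule sum.distrib)
  also have "(\<Sum>i<n. (if x a i then a i else 0)) = (\<Sum>i\<in>X. a i)"
    unfolding X_def by (rule sum.inter_filter[symmetric]) simp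
  also have "(\<Sum>i<n. (if y a i then ov i else 0)) = (\<Sum>i\<in>Y. ov i)"
    unfolding Y_def by (rule sum.inter_filter[symmetric]) simp
  finally have eq: "(\<Sum>i<n. (if x a i then a i else 0) + (if y a i then ov i else 0)) = (\<Sum>i\<in>X. a i) + (\<Sum>i\<in>Y. ov i)" .
  obtain X' where X': "X \<subseteq> X'" "X' \<subseteq> {..<n}" "card X' = k"
    using extend_set[OF XS(1) cX kn] by blast
  obtain Y' where Y': "Y \<subseteq> Y'" "Y' \<subseteq> {..<n}" "card Y' = k"
    using extend_set[OF XS(2) cY kn] by blast
  have fX': "finite X'" by (rule finite_subset[OF X'(2) finite_lessThan])
  have fY': "finite Y'" by (rule finite_subset[OF Y'(2) finite_lessThan])
  have "(\<Sum>i\<in>X. a i) \<le> (\<Sum>i\<in>X'. a i)"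
    by (rule sum_mono2[OF fX' X'(1)]) (use X'(2) anon in auto)
  also have "\<dots> \<le> topsum k {..<n} a" by (rule topsum_ge[OF _ X'(2,3)]) simp
  finally have 1: "(\<Sum>i\<in>X. a i) \<le> topsum k {..<n} a" .
  have "(\<Sum>i\<in>Y. ov i) \<le> (\<Sum>i\<in>Y'. ov i)"
    by (rule sum_mono2[OF fY' Y'(1)]) (use Y'(2) onon in auto)
  also have "\<dots> = (\<Sum>j<k. ov (sorted_list_of_set Y' ! j))"
    using sum_list_nth[of "sorted_list_of_set Y'" ov] fY' Y'(3) by simp
  also have "\<dots> \<le> S" by (rule Sge) (simp_all add: fY' Y'(2,3))
  finally have 2: "(\<Sum>i\<in>Y. ov i) \<le> S" .
  show ?thesis unfolding eq using 1 2 by simp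
qed

theorem theorem6:
  fixes n k :: nat and G :: "nat \<Rightarrow> real measure" and ov :: "nat \<Rightarrow> real"
  assumes "k \<le> n"
    and "\<And>i. i < n \<Longrightarrow> prob_space (G i)"
    and "\<And>i. i < n \<Longrightarrow> sets (G i) = sets borel"
    and "\<And>i. i < n \<Longrightarrow> AE t in G i. t \<ge> 0"
    and "\<And>i. i < n \<Longrightarrow> integrable (G i) (\<lambda>t. t)"
    and "\<And>i. i < n \<Longrightarrow> ov i \<ge> 0"
  shows "\<forall>x y. feasible_mech n k x y \<longrightarrow> OBJ_GC n k G ov \<ge> OBJ n G ov x y / 2"
proof (intro allI impI)
  fix x y assume feas: "feasible_mech n k x y"
  have gb: "gcb n G" by (rule gcb.intro[OF assms(2,3,5)])
  interpret gcb n G by (rule gb)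
  define L where "L = {I. distinct I \<and> length I = k \<and> set I \<subseteq> {..<n}}"
  have fL: "finite L" unfolding L_def
    by (rule finite_subset[OF _ finite_lists_length_eq[OF finite_lessThan, of n k]]) auto
  have neL: "[0..<k] \<in> L" unfolding L_def using assms(1) by auto
  define S where "S = Max ((\<lambda>I. \<Sum>j<k. ov (I ! j)) ` L)"
  have "S \<in> (\<lambda>I. \<Sum>j<k. ov (I ! j)) ` L" unfolding S_def using fL neL by (intro Max_in) auto
  then obtain Ib where Ib: "Ib \<in> L" "S = (\<Sum>j<k. ov (Ib ! j))" by auto
  have Sge: "(\<Sum>j<k. ov (I ! j)) \<le> S" if "distinct I" "length I = k" "set I \<subseteq> {..<n}" for I
    unfolding S_def using fL that by (intro Max_ge) (auto simp: L_def)
  have Ib': "distinct Ib" "length Ib = k" "set Ib \<subseteq> {..<n}" using Ib(1) unfolding L_def by auto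
  interpret gi: gcI n G k ov Ib
    by (rule gcI.intro[OF gb gcI_axioms.intro[OF assms(1) Ib']])
  define A where "A = (\<integral>a. topsum k {..<n} a \<partial>P)"
  have S0: "S \<ge> 0" unfolding Ib(2)
    by (rule sum_nonneg) (use assms(6) gi.Inth in auto)
  have ge1: "A \<le> OBJ_GC_I n k G ov Ib" unfolding A_def by (rule gi.OBJI_ge_ads)
  have ge2: "S \<le> OBJ_GC_I n k G ov Ib" unfolding Ib(2) by (rule gi.OBJI_ge_org)
  have ge3: "OBJ_GC_I n k G ov Ib \<le> OBJ_GC n k G ov"
    unfolding OBJ_GC_def using fL Ib(1) by (intro Max_ge) (auto simp: L_def)
  have AEnn: "AE a in P. \<forall>i\<in>{..<n}. a i \<ge> 0"
  proof (rule AE_finite_allI)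
    fix i assume "i \<in> {..<n}"
    then show "AE a in P. a i \<ge> 0"
      using AE_PiM_component[of "{..<n}" G i "\<lambda>t. t \<ge> 0"] assms(2,4) by auto
  qed simp
  have Dg: "D (\<lambda>a. topsum k {..<n} a + S)"
    by (rule D_add[OF D_topsum D_const]) (use assms(1) in auto)
  interpret p: prob_space P by (rule probP)
  have "OBJ n G ov x y \<le> (\<integral>a. topsum k {..<n} a + S \<partial>P)"
    unfolding OBJ_def profile_dist_def
  proof (rule integral_mono_AE'[OF D_int[OF Dg]])
    show "AE a in P. (\<Sum>i<n. (if x a i then a i else 0) + (if y a i then ov i else 0)) \<le> topsum k {..<n} a + S"
      using AEnn by eventually_elim (rule pointwise_bound[OF assms(1) feas _ assms(6) Sge], auto)
    show "AE a in P. 0 \<le> topsum k {..<n} a + S"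
      using AEnn by eventually_elim (use S0 assms(1) in \<open>auto intro!: add_nonneg_nonneg topsum_nonneg\<close>)
  qed
  also have "\<dots> = A + S" unfolding A_def
    using D_int[OF D_topsum[of "{..<n}" k]] assms(1) by (simp add: p.prob_space)
  finally show "OBJ_GC n k G ov \<ge> OBJ n G ov x y / 2" using ge1 ge2 ge3 by linarith
qed

end
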